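(* Let $G(\mathcal V,\mathcal E)$ be a finite simple directed graph and $f\ge 0$ an integer, and assume Condition 1 holds for $G$. Let $A,B,F$ be a partition of $\mathcal V$ with $A,B$ both non-empty and $|F|\le f$. If it is not the case that $B \Rightarrow_{\mathcal V - F} A$, then there exist sets $A',B'$ such that: $A'$ and $B'$ are both non-empty; $A',B'$ form a partition of $A\cup B$; $A'\subseteq A$ and $B\subseteq B'$; and $B'\not\rightarrow A'$.
   Context: For disjoint sets $X,Y\subseteq\mathcal V$ with $Y$ non-empty, $X\rightarrow Y$ means that $X$ contains at least $f+1$ distinct nodes $i$ such that $(i,j)\in\mathcal E$ for some $j\in Y$; $X\not\rightarrow Y$ means this fails. Condition 1: for every partition $L,C,R,F$ of $\mathcal V$ (with $C$ or $F$ possibly empty) such that $L,R$ are non-empty and $|F|\le f$, either $L\cup C\rightarrow R$ or $R\cup C\rightarrow L$. An $(X,y)$-path is a directed path from some node of $X$ to the node $y\notin X$; it excludes $F$ if it contains no node of $F$; $(X,y)$-paths are disjoint if they pairwise share only $y$. For pairwise disjoint $X,Y,F$ with $|F|\le f$, $X \Rightarrow_{\mathcal V - F} Y$ means: $Y=\emptyset$, or every $y\in Y$ has at least $f+1$ pairwise disjoint $(X,y)$-paths excluding $F$. *)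

theory Defs
  imports Main
begin

definition simple_digraph :: "'a set \<Rightarrow> ('a \<times> 'a) set \<Rightarrow> bool" where
  "simple_digraph V E \<longleftrightarrow> finite V \<and> E \<subseteq> V \<times> V \<and> (\<forall>v. (v, v) \<notin> E)"

definition reaches :: "nat \<Rightarrow> ('a \<times> 'a) set \<Rightarrow> 'a set \<Rightarrow> 'a set \<Rightarrow> bool" where
  "reaches f E X Y \<longleftrightarrow> f + 1 \<le> card {i \<in> X. \<exists>j \<in> Y. (i, j) \<in> E}"

definition condition1 :: "nat \<Rightarrow> 'a set \<Rightarrow> ('a \<times> 'a) set \<Rightarrow> bool" where
  "condition1 f V E \<longleftrightarrow>
    (\<forall>L C R F. L \<union> C \<union> R \<union> F = V \<and> L \<inter> C = {} \<and> L \<inter> R = {} \<and> L \<inter> F = {}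
        \<and> C \<inter> R = {} \<and> C \<inter> F = {} \<and> R \<inter> F = {}
        \<and> L \<noteq> {} \<and> R \<noteq> {} \<and> card F \<le> f
      \<longrightarrow> reaches f E (L \<union> C) R \<or> reaches f E (R \<union> C) L)"

definition dpath :: "'a set \<Rightarrow> ('a \<times> 'a) set \<Rightarrow> 'a list \<Rightarrow> bool" where
  "dpath V E p \<longleftrightarrow> p \<noteq> [] \<and> distinct p \<and> set p \<subseteq> V
      \<and> (\<forall>k. Suc k < length p \<longrightarrow> (p ! k, p ! Suc k) \<in> E)"

definition Xy_path :: "'a set \<Rightarrow> ('a \<times> 'a) set \<Rightarrow> 'a set \<Rightarrow> 'a \<Rightarrow> 'a list \<Rightarrow> bool" where
  "Xy_path V E X y p \<longleftrightarrow> dpath V E p \<and> hd p \<in> X \<and> last p = y"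

definition reaches_paths :: "nat \<Rightarrow> 'a set \<Rightarrow> ('a \<times> 'a) set \<Rightarrow> 'a set \<Rightarrow> 'a set \<Rightarrow> 'a set \<Rightarrow> bool" where
  "reaches_paths f V E F X Y \<longleftrightarrow> Y = {} \<or>
     (\<forall>y \<in> Y. \<exists>P. finite P \<and> f + 1 \<le> card P
        \<and> (\<forall>p \<in> P. Xy_path V E X y p \<and> set p \<inter> F = {})
        \<and> (\<forall>p \<in> P. \<forall>q \<in> P. p \<noteq> q \<longrightarrow> set p \<inter> set q \<subseteq> {y}))"

end

theory Submission
  imports Defs
begin

fun walk :: "('a \<times> 'a) set \<Rightarrow> 'a list \<Rightarrow> bool" where
  "walk E [] = True"
| "walk E [v] = True"
| "walk E (u # v # vs) = ((u, v) \<in> E \<and> walk E (v # vs))"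

lemma walk_Cons: "walk E (u # vs) = (walk E vs \<and> (vs \<noteq> [] \<longrightarrow> (u, hd vs) \<in> E))"
  by (cases vs) auto

lemma walk_append:
  "walk E (xs @ ys) = (walk E xs \<and> walk E ys \<and> (xs \<noteq> [] \<longrightarrow> ys \<noteq> [] \<longrightarrow> (last xs, hd ys) \<in> E))"
proof (induction xs)
  case Nil then show ?case by simp
next
  case (Cons a xs)
  have "walk E ((a # xs) @ ys) = (walk E (xs @ ys) \<and> (xs @ ys \<noteq> [] \<longrightarrow> (a, hd (xs @ ys)) \<in> E))"
    by (simp only: append_Cons walk_Cons)
  also have "\<dots> = (walk E (a # xs) \<and> walk E ys \<and> (a # xs \<noteq> [] \<longrightarrow> ys \<noteq> [] \<longrightarrow> (last (a # xs), hd ys) \<in> E))"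
    using Cons.IH by (cases "xs = []") (auto simp: walk_Cons)
  finally show ?case .
qed

lemma walk_mono: "walk E p \<Longrightarrow> E \<subseteq> E' \<Longrightarrow> walk E' p"
  by (induction E p rule: walk.induct) auto

lemma walk_rev: "walk E p \<Longrightarrow> walk (E\<inverse>) (rev p)"
  by (induction E p rule: walk.induct) (auto simp: walk_append)

lemma walk_rtrancl: "walk E p \<Longrightarrow> p \<noteq> [] \<Longrightarrow> (hd p, last p) \<in> E\<^sup>*"
  by (induction E p rule: walk.induct) (auto intro: converse_rtrancl_into_rtrancl)

definition restr :: "('a \<times> 'a) set \<Rightarrow> 'a set \<Rightarrow> ('a \<times> 'a) set" where
  "restr E S = {(u, v). (u, v) \<in> E \<and> u \<notin> S \<and> v \<notin> S}"

lemma walk_restr: "walk E p \<Longrightarrow> set p \<inter> S = {} \<Longrightarrow> walk (restr E S) p"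
  by (induction E p rule: walk.induct) (auto simp: restr_def)

lemma walk_nth: "walk E p \<Longrightarrow> Suc k < length p \<Longrightarrow> (p ! k, p ! Suc k) \<in> E"
proof (induction p arbitrary: k rule: walk.induct)
  case (3 E u v vs) then show ?case by (cases k) auto
qed auto

lemma walk_set_Range: "walk E (u # vs) \<Longrightarrow> set vs \<subseteq> Range E"
  by (induction vs arbitrary: u) (auto simp: walk_Cons)

lemma set_butlast_last: "p \<noteq> [] \<Longrightarrow> set p = insert (last p) (set (butlast p))"
  by (induction p) auto

lemma set_hd_tl: "p \<noteq> [] \<Longrightarrow> set p = insert (hd p) (set (tl p))"
  by (cases p) auto

definition sep :: "('a \<times> 'a) set \<Rightarrow> 'a set \<Rightarrow> 'a set \<Rightarrow> 'a set \<Rightarrow> bool" where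
  "sep E A B S \<longleftrightarrow> (\<forall>a\<in>A. \<forall>b\<in>B. a \<notin> S \<longrightarrow> b \<notin> S \<longrightarrow> (a, b) \<notin> (restr E S)\<^sup>*)"

definition linkage :: "('a \<times> 'a) set \<Rightarrow> 'a set \<Rightarrow> 'a set \<Rightarrow> 'a list set \<Rightarrow> bool" where
  "linkage E A B P \<longleftrightarrow> finite P \<and>
     (\<forall>p\<in>P. p \<noteq> [] \<and> distinct p \<and> walk E p \<and> hd p \<in> A \<and> last p \<in> B) \<and>
     (\<forall>p\<in>P. \<forall>q\<in>P. p \<noteq> q \<longrightarrow> set p \<inter> set q = {})"

lemma linkage_mono: "linkage E A B P \<Longrightarrow> E \<subseteq> E' \<Longrightarrow> linkage E' A B P"
  unfolding linkage_def by (meson walk_mono)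

lemma linkage_rev:
  assumes "linkage E A B P"
  shows "linkage (E\<inverse>) B A (rev ` P) \<and> card (rev ` P) = card P"
proof -
  have inj: "inj_on rev P" by (auto simp: inj_on_def)
  show ?thesis using assms inj walk_rev
    unfolding linkage_def by (auto simp: card_image hd_rev last_rev)
qed

lemma sep_converse: "sep (E\<inverse>) B A T = sep E A B T"
proof -
  have r: "restr (E\<inverse>) T = (restr E T)\<inverse>" by (auto simp: restr_def)
  show ?thesis unfolding sep_def r rtrancl_converse by blast
qed

lemma trunc_linkage:
  assumes "linkage E A X P"
  shows "\<exists>P'. linkage E A X P' \<and> card P' = card P \<and> (\<forall>p\<in>P'. set (butlast p) \<inter> X = {})"
proof -
  define t where "t p = takeWhile (\<lambda>v. v \<notin> X) p @ [hd (dropWhile (\<lambda>v. v \<notin> X) p)]" for p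
  have props: "t p \<noteq> [] \<and> distinct (t p) \<and> walk E (t p) \<and> hd (t p) = hd p \<and> last (t p) \<in> X
     \<and> set (t p) \<subseteq> set p \<and> set (butlast (t p)) \<inter> X = {}" if "p \<in> P" for p
  proof -
    have p: "p \<noteq> []" "distinct p" "walk E p" "last p \<in> X" using assms that unfolding linkage_def by auto
    have "\<exists>v\<in>set p. v \<in> X" using p by auto
    then have dw: "dropWhile (\<lambda>v. v \<notin> X) p \<noteq> []" by (simp add: dropWhile_eq_Nil_conv)
    then have hdX: "hd (dropWhile (\<lambda>v. v \<notin> X) p) \<in> X" using hd_dropWhile[OF dw] by simp
    have split: "p = t p @ tl (dropWhile (\<lambda>v. v \<notin> X) p)"
      unfolding t_def by (simp add: list.collapse[OF dw])
    have ne: "t p \<noteq> []" unfolding t_def by simp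
    have "walk E (t p)" using p(3) split walk_append by metis
    moreover have "distinct (t p)" using p(2) split distinct_append by metis
    moreover have "hd (t p) = hd p" using split ne by (metis hd_append2)
    moreover have "set (t p) \<subseteq> set p" using split by (metis set_append Un_upper1)
    moreover have "last (t p) \<in> X" using hdX unfolding t_def by simp
    moreover have "set (butlast (t p)) \<inter> X = {}" unfolding t_def
      by (auto dest: set_takeWhileD)
    ultimately show ?thesis using ne by blast
  qed
  have inj: "inj_on t P"
  proof (rule inj_onI)
    fix p q assume pq: "p \<in> P" "q \<in> P" "t p = t q"
    show "p = q"
    proof (rule ccontr)
      assume "p \<noteq> q"
      then have "set p \<inter> set q = {}" using assms pq unfolding linkage_def by blast
      moreover have h: "hd (t p) \<in> set (t p)" using props[OF pq(1)] hd_in_set by blast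
      moreover have "hd (t p) \<in> set p" using h props[OF pq(1)] by blast
      moreover have "hd (t p) \<in> set q" using h props[OF pq(2)] pq(3) by auto
      ultimately show False by blast
    qed
  qed
  have f1: "finite (t ` P)" using assms unfolding linkage_def by auto
  have f2: "\<forall>p\<in>t ` P. p \<noteq> [] \<and> distinct p \<and> walk E p \<and> hd p \<in> A \<and> last p \<in> X"
  proof
    fix p assume "p \<in> t ` P"
    then obtain p0 where p0: "p0 \<in> P" "p = t p0" by blast
    then show "p \<noteq> [] \<and> distinct p \<and> walk E p \<and> hd p \<in> A \<and> last p \<in> X"
      using props[OF p0(1)] assms unfolding linkage_def by auto
  qed
  have f3: "\<forall>p\<in>t ` P. \<forall>q\<in>t ` P. p \<noteq> q \<longrightarrow> set p \<inter> set q = {}"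
  proof (intro ballI impI)
    fix p q assume "p \<in> t ` P" "q \<in> t ` P" "p \<noteq> q"
    then obtain p0 q0 where "p0 \<in> P" "q0 \<in> P" "p = t p0" "q = t q0" "p0 \<noteq> q0" by blast
    then show "set p \<inter> set q = {}" using props assms unfolding linkage_def by blast
  qed
  have "linkage E A X (t ` P)" unfolding linkage_def using f1 f2 f3 by blast
  moreover have "card (t ` P) = card P" using inj by (simp add: card_image)
  moreover have "\<forall>p\<in>t ` P. set (butlast p) \<inter> X = {}" using props by blast
  ultimately show ?thesis by blast
qed

lemma sep_lift:
  assumes xX: "x \<in> X" and sX: "sep E A B X" and sT: "sep (E - {(x, z)}) A X T"
  shows "sep E A B T"
  unfolding sep_def
proof (intro ballI impI notI)
  fix a b assume a: "a \<in> A" "b \<in> B" "a \<notin> T" "b \<notin> T" and ab: "(a, b) \<in> (restr E T)\<^sup>*"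
  define Q where "Q = {(p, q). (p, q) \<in> E \<and> p \<notin> T \<and> q \<notin> T \<and> p \<notin> X}"
  have QE: "Q \<subseteq> restr (E - {(x, z)}) T" using xX by (auto simp: Q_def restr_def)
  have L: "(\<exists>w\<in>X. (u, w) \<in> Q\<^sup>*) \<or> (u, b) \<in> (restr E (T \<union> X))\<^sup>*"
    if "(u, b) \<in> (restr E T)\<^sup>*" for u
    using that
  proof (induction rule: converse_rtrancl_induct)
    case base then show ?case by (cases "b \<in> X") auto
  next
    case (step u u')
    show ?case
    proof (cases "u \<in> X")
      case True then show ?thesis by auto
    next
      case False
      with step(1) have uQ: "(u, u') \<in> Q" by (auto simp: Q_def restr_def)
      show ?thesis
      proof (cases "u' \<in> X")
        case True then show ?thesis using uQ by auto
      next
        case False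
        with \<open>u \<notin> X\<close> step(1) have "(u, u') \<in> restr E (T \<union> X)" by (auto simp: restr_def)
        with step(3) uQ show ?thesis by (meson converse_rtrancl_into_rtrancl)
      qed
    qed
  qed
  have noX: "\<not> (\<exists>w\<in>X. (a, w) \<in> Q\<^sup>*)"
  proof
    assume "\<exists>w\<in>X. (a, w) \<in> Q\<^sup>*"
    then obtain w where w: "w \<in> X" "(a, w) \<in> Q\<^sup>*" by blast
    have "w \<notin> T" using w(2) a(3) by (cases rule: rtranclE) (auto simp: Q_def)
    moreover have "(a, w) \<in> (restr (E - {(x, z)}) T)\<^sup>*" using w(2) QE rtrancl_mono by blast
    ultimately show False using sT a w(1) unfolding sep_def by blast
  qed
  then have ab2: "(a, b) \<in> (restr E (T \<union> X))\<^sup>*" using L ab by blast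
  have aX: "a \<notin> X" using noX by blast
  have bX: "b \<notin> X" using ab2 aX by (cases rule: rtranclE) (auto simp: restr_def)
  have "restr E (T \<union> X) \<subseteq> restr E X" by (auto simp: restr_def)
  then have "(a, b) \<in> (restr E X)\<^sup>*" using ab2 rtrancl_mono by blast
  then show False using sX a aX bX unfolding sep_def by blast
qed

lemma cross:
  assumes sS: "sep E A B S" and SX: "S \<subseteq> X" and SY: "S \<subseteq> Y"
    and p: "walk E p" "p \<noteq> []" "hd p \<in> A" "set (butlast p) \<inter> X = {}"
    and q: "walk E q" "q \<noteq> []" "last q \<in> B" "set (tl q) \<inter> Y = {}"
    and v: "v \<in> set p" "v \<in> set q"
  shows "v \<in> S"
proof (rule ccontr)
  assume vS: "v \<notin> S"
  obtain p1 p2 where pp: "p = p1 @ v # p2" using v(1) split_list by metis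
  obtain q1 q2 where qq: "q = q1 @ v # q2" using v(2) split_list by metis
  have "set p1 \<subseteq> set (butlast p)" using pp by (simp add: butlast_append)
  hence p1S: "set p1 \<inter> S = {}" using SX p(4) by blast
  have "set q2 \<subseteq> set (tl q)" using qq by (cases q1) auto
  hence q2S: "set q2 \<inter> S = {}" using SY q(4) by blast
  have w1: "walk E (p1 @ [v])" using p(1) pp by (simp add: walk_append)
  have w2: "walk E (v # q2)" using q(1) qq by (simp add: walk_append)
  have s1: "set (p1 @ [v]) \<inter> S = {}" using p1S vS by auto
  have s2: "set (v # q2) \<inter> S = {}" using q2S vS by auto
  have hp: "hd p = hd (p1 @ [v])" using pp by (cases p1) auto
  have lq: "last q = last (v # q2)" using qq by simp
  have r1: "(hd p, v) \<in> (restr E S)\<^sup>*" using walk_rtrancl[OF walk_restr[OF w1 s1]] hp by simp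
  have r2: "(v, last q) \<in> (restr E S)\<^sup>*" using walk_rtrancl[OF walk_restr[OF w2 s2]] lq by simp
  have "hd p \<notin> S" using hp s1 hd_in_set[of "p1 @ [v]"] by auto
  moreover have "last q \<notin> S" using lq s2 last_in_set[of "v # q2"] by auto
  ultimately show False using sS p(3) q(3) r1 r2 unfolding sep_def by (meson rtrancl_trans)
qed

lemma combine:
  assumes sS: "sep E' A B S" and fS: "finite S" and xS: "x \<notin> S" and zS: "z \<notin> S"
    and e: "(x, z) \<in> E" and EE: "E' \<subseteq> E"
    and P1: "linkage E' A (insert x S) P1" "card P1 = card (insert x S)"
      "\<forall>p\<in>P1. set (butlast p) \<inter> insert x S = {}"
    and P2: "linkage E' (insert z S) B P2" "card P2 = card (insert z S)"
      "\<forall>q\<in>P2. set (tl q) \<inter> insert z S = {}"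
  shows "\<exists>P. linkage E A B P \<and> card P = card (insert x S)"
proof -
  define X where "X = insert x S"
  define Y where "Y = insert z S"
  have fX: "finite X" "finite Y" using fS by (auto simp: X_def Y_def)
  have L1: "\<forall>p\<in>P1. p \<noteq> [] \<and> distinct p \<and> walk E' p \<and> hd p \<in> A \<and> last p \<in> X"
    "\<forall>p\<in>P1. \<forall>q\<in>P1. p \<noteq> q \<longrightarrow> set p \<inter> set q = {}" "finite P1"
    using P1(1) unfolding linkage_def X_def by auto
  have L2: "\<forall>p\<in>P2. p \<noteq> [] \<and> distinct p \<and> walk E' p \<and> hd p \<in> Y \<and> last p \<in> B"
    "\<forall>p\<in>P2. \<forall>q\<in>P2. p \<noteq> q \<longrightarrow> set p \<inter> set q = {}" "finite P2"
    using P2(1) unfolding linkage_def Y_def by auto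
  have inj1: "inj_on last P1"
  proof (rule inj_onI)
    fix p q assume "p \<in> P1" "q \<in> P1" "last p = last q"
    then show "p = q"
    proof (rule_tac ccontr)
      assume pq: "p \<in> P1" "q \<in> P1" "last p = last q" "p \<noteq> q"
      then have "set p \<inter> set q = {}" using L1(2) by blast
      moreover have "last p \<in> set p" "last q \<in> set q" using pq L1(1) last_in_set by blast+
      ultimately show False using pq(3) by auto
    qed
  qed
  have inj2: "inj_on hd P2"
  proof (rule inj_onI)
    fix p q assume "p \<in> P2" "q \<in> P2" "hd p = hd q"
    then show "p = q"
    proof (rule_tac ccontr)
      assume pq: "p \<in> P2" "q \<in> P2" "hd p = hd q" "p \<noteq> q"
      then have "set p \<inter> set q = {}" using L2(2) by blast
      moreover have "hd p \<in> set p" "hd q \<in> set q" using pq L2(1) hd_in_set by blast+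
      ultimately show False using pq(3) by auto
    qed
  qed
  have im1: "last ` P1 = X"
  proof (rule card_subset_eq[OF fX(1)])
    show "last ` P1 \<subseteq> X" using L1 by auto
    show "card (last ` P1) = card X" using inj1 P1(2) by (simp add: card_image X_def)
  qed
  have im2: "hd ` P2 = Y"
  proof (rule card_subset_eq[OF fX(2)])
    show "hd ` P2 \<subseteq> Y" using L2 by auto
    show "card (hd ` P2) = card Y" using inj2 P2(2) by (simp add: card_image Y_def)
  qed
  define g1 where "g1 = the_inv_into P1 last"
  define g2 where "g2 = the_inv_into P2 hd"
  have g1: "g1 a \<in> P1 \<and> last (g1 a) = a" if "a \<in> X" for a
    using that im1 inj1 the_inv_into_into[of last P1 a P1] f_the_inv_into_f[of last P1 a]
    unfolding g1_def by auto
  have g2: "g2 b \<in> P2 \<and> hd (g2 b) = b" if "b \<in> Y" for b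
    using that im2 inj2 the_inv_into_into[of hd P2 b P2] f_the_inv_into_f[of hd P2 b]
    unfolding g2_def by auto
  have crs: "v \<in> S \<and> v = a \<and> v = b"
    if ab: "a \<in> X" "b \<in> Y" and v: "v \<in> set (g1 a)" "v \<in> set (g2 b)" for a b v
  proof -
    have p: "walk E' (g1 a)" "g1 a \<noteq> []" "hd (g1 a) \<in> A" "set (butlast (g1 a)) \<inter> X = {}"
      using g1[OF ab(1)] L1 P1(3) unfolding X_def by auto
    have q: "walk E' (g2 b)" "g2 b \<noteq> []" "last (g2 b) \<in> B" "set (tl (g2 b)) \<inter> Y = {}"
      using g2[OF ab(2)] L2 P2(3) unfolding Y_def by auto
    have vS: "v \<in> S" using cross[OF sS _ _ p q v] unfolding X_def Y_def by blast
    have "set (g1 a) = insert (last (g1 a)) (set (butlast (g1 a)))"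
      using p(2) by (rule set_butlast_last)
    then have "v = a" using v(1) vS p(4) g1[OF ab(1)] unfolding X_def by auto
    moreover have "set (g2 b) = insert (hd (g2 b)) (set (tl (g2 b)))"
      using q(2) by (rule set_hd_tl)
    then have "v = b" using v(2) vS q(4) g2[OF ab(2)] unfolding Y_def by auto
    ultimately show ?thesis using vS by simp
  qed
  define s where "s a = (if a = x then z else a)" for a
  define c where "c a = (if a = x then g1 a @ g2 z else g1 a @ tl (g2 a))" for a
  have sY: "s a \<in> Y" if "a \<in> X" for a using that by (auto simp: s_def X_def Y_def)
  have tlsub: "set (tl l) \<subseteq> set l" for l :: "'a list" by (cases l) auto
  have cset: "set (c a) \<subseteq> set (g1 a) \<union> set (g2 (s a))" for a
    using tlsub by (auto simp: c_def s_def)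
  have cpath: "c a \<noteq> [] \<and> distinct (c a) \<and> walk E (c a) \<and> hd (c a) \<in> A \<and> last (c a) \<in> B"
    if aX: "a \<in> X" for a
  proof -
    have a1: "g1 a \<in> P1" "last (g1 a) = a" using g1[OF aX] by auto
    have p: "g1 a \<noteq> []" "distinct (g1 a)" "walk E (g1 a)" "hd (g1 a) \<in> A"
      using a1 L1 walk_mono[OF _ EE] by auto
    show ?thesis
    proof (cases "a = x")
      case True
      have zY: "z \<in> Y" by (simp add: Y_def)
      have b1: "g2 z \<in> P2" "hd (g2 z) = z" using g2[OF zY] by auto
      have q: "g2 z \<noteq> []" "distinct (g2 z)" "walk E (g2 z)" "last (g2 z) \<in> B"
        using b1 L2 walk_mono[OF _ EE] by auto
      have dj: "set (g1 a) \<inter> set (g2 z) = {}"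
        using crs[OF aX zY] True xS by blast
      have "walk E (g1 a @ g2 z)" using p q a1 b1 e True by (simp add: walk_append)
      moreover have "distinct (g1 a @ g2 z)" using p q dj by simp
      ultimately show ?thesis using p q True by (simp add: c_def)
    next
      case False
      then have aS: "a \<in> S" using aX by (simp add: X_def)
      then have aY: "a \<in> Y" by (simp add: Y_def)
      have b1: "g2 a \<in> P2" "hd (g2 a) = a" using g2[OF aY] by auto
      have q: "g2 a \<noteq> []" "distinct (g2 a)" "walk E (g2 a)" "last (g2 a) \<in> B"
        using b1 L2 walk_mono[OF _ EE] by auto
      have qq: "g2 a = a # tl (g2 a)" using q(1) b1(2) list.collapse by fastforce
      have "walk E (a # tl (g2 a))" using q(3) qq by simp
      then have wt: "walk E (tl (g2 a))" "tl (g2 a) \<noteq> [] \<longrightarrow> (a, hd (tl (g2 a))) \<in> E"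
        unfolding walk_Cons by auto
      have "walk E (g1 a @ tl (g2 a))" using p(1,3) wt a1(2) by (simp add: walk_append)
      moreover have "distinct (g1 a @ tl (g2 a))"
      proof -
        have "distinct (a # tl (g2 a))" using q(2) qq by simp
        then have "a \<notin> set (tl (g2 a))" by simp
        moreover have "v \<in> set (tl (g2 a)) \<Longrightarrow> v \<in> set (g1 a) \<Longrightarrow> v = a" for v
          using crs[OF aX aY] tlsub by blast
        ultimately have "set (g1 a) \<inter> set (tl (g2 a)) = {}" by blast
        then show ?thesis using p(2) q(2) by (simp add: distinct_tl)
      qed
      moreover have "last (g1 a @ tl (g2 a)) \<in> B"
      proof (cases "tl (g2 a) = []")
        case True
        then have "g2 a = [a]" using qq by simp
        then show ?thesis using q(4) a1 True by simp
      next
        case False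
        then have "last (tl (g2 a)) = last (g2 a)" using qq last_ConsR by metis
        then show ?thesis using q(4) False by simp
      qed
      ultimately show ?thesis using p False by (simp add: c_def)
    qed
  qed
  have cdisj: "set (c a) \<inter> set (c a') = {}" if aa: "a \<in> X" "a' \<in> X" "a \<noteq> a'" for a a'
  proof -
    have "g1 a \<noteq> g1 a'" using g1[OF aa(1)] g1[OF aa(2)] aa(3) by auto
    then have d11: "set (g1 a) \<inter> set (g1 a') = {}"
      using g1[OF aa(1)] g1[OF aa(2)] L1(2) by blast
    have "s a \<noteq> s a'" using aa zS by (auto simp: s_def X_def)
    then have "g2 (s a) \<noteq> g2 (s a')" using g2[OF sY[OF aa(1)]] g2[OF sY[OF aa(2)]] by metis
    then have d22: "set (g2 (s a)) \<inter> set (g2 (s a')) = {}"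
      using g2[OF sY[OF aa(1)]] g2[OF sY[OF aa(2)]] L2(2) by blast
    have d12: "set (g1 b) \<inter> set (g2 (s b')) = {}" if "b \<in> X" "b' \<in> X" "b \<noteq> b'" for b b'
    proof -
      { fix v assume "v \<in> set (g1 b)" "v \<in> set (g2 (s b'))"
        then have "v \<in> S \<and> v = b \<and> v = s b'" using crs[OF that(1) sY[OF that(2)]] by blast
        then have False using that zS by (auto simp: s_def split: if_splits) }
      then show ?thesis by blast
    qed
    have e1: "set (g1 a) \<inter> set (g2 (s a')) = {}" using d12[OF aa] .
    have e2: "set (g1 a') \<inter> set (g2 (s a)) = {}" using d12[OF aa(2,1)] aa(3) by blast
    show ?thesis using cset[of a] cset[of a'] d11 d22 e1 e2 by blast
  qed
  have injc: "inj_on c X"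
  proof (rule inj_onI)
    fix a a' assume "a \<in> X" "a' \<in> X" "c a = c a'"
    then show "a = a'"
    proof (rule_tac ccontr)
      assume h: "a \<in> X" "a' \<in> X" "c a = c a'" "a \<noteq> a'"
      have "set (c a) \<inter> set (c a') = {}" using cdisj h by blast
      moreover have "c a \<noteq> []" using cpath h by blast
      ultimately show False using h(3) by simp
    qed
  qed
  have "linkage E A B (c ` X)"
    unfolding linkage_def
  proof (intro conjI)
    show "finite (c ` X)" using fX by simp
    show "\<forall>p\<in>c ` X. p \<noteq> [] \<and> distinct p \<and> walk E p \<and> hd p \<in> A \<and> last p \<in> B"
    proof
      fix p assume "p \<in> c ` X"
      then obtain a where "a \<in> X" "p = c a" by blast
      then show "p \<noteq> [] \<and> distinct p \<and> walk E p \<and> hd p \<in> A \<and> last p \<in> B"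
        using cpath[of a] by simp
    qed
    show "\<forall>p\<in>c ` X. \<forall>q\<in>c ` X. p \<noteq> q \<longrightarrow> set p \<inter> set q = {}"
    proof (intro ballI impI)
      fix p q assume "p \<in> c ` X" "q \<in> c ` X" "p \<noteq> q"
      then obtain a a' where "a \<in> X" "a' \<in> X" "p = c a" "q = c a'" "a \<noteq> a'" by blast
      then show "set p \<inter> set q = {}" using cdisj[of a a'] by simp
    qed
  qed
  moreover have "card (c ` X) = card X" using injc by (simp add: card_image)
  ultimately show ?thesis unfolding X_def by blast
qed

lemma menger:
  assumes "finite E" "finite A" "finite B" "\<forall>T. finite T \<longrightarrow> sep E A B T \<longrightarrow> k \<le> card T"
  shows "\<exists>P. linkage E A B P \<and> card P = k"
  using assms
proof (induction "card E" arbitrary: E A B k rule: less_induct)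
  case less
  show ?case
  proof (cases "E = {}")
    case True
    have "restr E (A \<inter> B) = {}" using True by (simp add: restr_def)
    then have "sep E A B (A \<inter> B)" unfolding sep_def by auto
    then have "k \<le> card (A \<inter> B)" using less.prems by auto
    then obtain C where C: "C \<subseteq> A \<inter> B" "card C = k" "finite C"
      using obtain_subset_with_card_n by metis
    define P where "P = (\<lambda>v. [v]) ` C"
    have "linkage E A B P" using C unfolding linkage_def P_def by auto
    moreover have "card P = k" unfolding P_def using C by (simp add: card_image inj_on_def)
    ultimately show ?thesis by blast
  next
    case False
    then obtain x z where e: "(x, z) \<in> E" by auto
    define E' where "E' = E - {(x, z)}"
    have cardE': "card E' < card E" unfolding E'_def using e less.prems(1) by (rule_tac card_Diff1_less)
    have fE': "finite E'" using less.prems(1) by (simp add: E'_def)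
    have EE: "E' \<subseteq> E" by (auto simp: E'_def)
    show ?thesis
    proof (cases "\<forall>T. finite T \<longrightarrow> sep E' A B T \<longrightarrow> k \<le> card T")
      case True
      from less.hyps[OF cardE' fE' less.prems(2,3) True] obtain P where
        "linkage E' A B P" "card P = k" by blast
      then show ?thesis using linkage_mono[OF _ EE] by blast
    next
      case False
      then obtain S where S: "finite S" "sep E' A B S" "card S < k" by (auto simp: not_le)
      define X where "X = insert x S"
      define Y where "Y = insert z S"
      have rX: "restr E X \<subseteq> restr E' S" by (auto simp: restr_def X_def E'_def)
      have rY: "restr E Y \<subseteq> restr E' S" by (auto simp: restr_def Y_def E'_def)
      have sepX: "sep E A B X" unfolding sep_def
      proof (intro ballI impI notI)
        fix a b assume "a \<in> A" "b \<in> B" "a \<notin> X" "b \<notin> X" "(a, b) \<in> (restr E X)\<^sup>*"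
        moreover have "(a, b) \<in> (restr E' S)\<^sup>*" using calculation(5) rX rtrancl_mono by blast
        ultimately show False using S(2) unfolding sep_def X_def by blast
      qed
      have sepY: "sep E A B Y" unfolding sep_def
      proof (intro ballI impI notI)
        fix a b assume "a \<in> A" "b \<in> B" "a \<notin> Y" "b \<notin> Y" "(a, b) \<in> (restr E Y)\<^sup>*"
        moreover have "(a, b) \<in> (restr E' S)\<^sup>*" using calculation(5) rY rtrancl_mono by blast
        ultimately show False using S(2) unfolding sep_def Y_def by blast
      qed
      have fX: "finite X" "finite Y" using S(1) by (auto simp: X_def Y_def)
      have kX: "k \<le> card X" using less.prems(4) sepX fX by blast
      have kY: "k \<le> card Y" using less.prems(4) sepY fX by blast
      have xS: "x \<notin> S"
      proof
        assume "x \<in> S" then have "X = S" by (auto simp: X_def)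
        then show False using kX S(3) by simp
      qed
      have zS: "z \<notin> S"
      proof
        assume "z \<in> S" then have "Y = S" by (auto simp: Y_def)
        then show False using kY S(3) by simp
      qed
      have cX: "card X = k" using kX S xS by (simp add: X_def)
      have cY: "card Y = k" using kY S zS by (simp add: Y_def)
      have h1: "\<forall>T. finite T \<longrightarrow> sep E' A X T \<longrightarrow> k \<le> card T"
      proof (intro allI impI)
        fix T assume "finite T" "sep E' A X T"
        then have "sep E A B T" using sep_lift[of x X E A B z T] sepX unfolding E'_def X_def by blast
        then show "k \<le> card T" using less.prems(4) \<open>finite T\<close> by blast
      qed
      obtain P1 where P1: "linkage E' A X P1" "card P1 = k"
        using less.hyps[OF cardE' fE' less.prems(2) fX(1) h1] by blast
      obtain P1' where P1': "linkage E' A X P1'" "card P1' = k" "\<forall>p\<in>P1'. set (butlast p) \<inter> X = {}"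
        using trunc_linkage[OF P1(1)] P1(2) by metis
      have conv: "E'\<inverse> = E\<inverse> - {(z, x)}" by (auto simp: E'_def)
      have h2: "\<forall>T. finite T \<longrightarrow> sep (E'\<inverse>) B Y T \<longrightarrow> k \<le> card T"
      proof (intro allI impI)
        fix T assume "finite T" "sep (E'\<inverse>) B Y T"
        then have "sep (E\<inverse> - {(z, x)}) B Y T" using conv by simp
        moreover have "sep (E\<inverse>) B A Y" using sepY sep_converse by metis
        moreover have "z \<in> Y" by (simp add: Y_def)
        ultimately have "sep (E\<inverse>) B A T" using sep_lift by metis
        then have "sep E A B T" using sep_converse by metis
        then show "k \<le> card T" using less.prems(4) \<open>finite T\<close> by blast
      qed
      have cardc: "card (E'\<inverse>) < card E" using cardE' by simp
      have fc: "finite (E'\<inverse>)" using fE' by simp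
      obtain Q where Q: "linkage (E'\<inverse>) B Y Q" "card Q = k"
        using less.hyps[OF cardc fc less.prems(3) fX(2) h2] by blast
      obtain Q' where Q': "linkage (E'\<inverse>) B Y Q'" "card Q' = k" "\<forall>p\<in>Q'. set (butlast p) \<inter> Y = {}"
        using trunc_linkage[OF Q(1)] Q(2) by metis
      have P2: "linkage E' Y B (rev ` Q')" "card (rev ` Q') = k"
        using linkage_rev[OF Q'(1)] Q'(2) by auto
      have P2t: "\<forall>q\<in>rev ` Q'. set (tl q) \<inter> Y = {}"
      proof
        fix q assume "q \<in> rev ` Q'"
        then obtain q0 where "q0 \<in> Q'" "q = rev q0" by blast
        moreover have "tl (rev q0) = rev (butlast q0)" by (metis butlast_rev rev_rev_ident)
        ultimately show "set (tl q) \<inter> Y = {}" using Q'(3) by simp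
      qed
      show ?thesis
        using combine[OF S(2,1) xS zS e EE, of P1' "rev ` Q'"] P1' P2 P2t cX cY
        unfolding X_def Y_def by auto
    qed
  qed
qed

theorem lemma6:
  fixes V :: "'a set" and E :: "('a \<times> 'a) set" and f :: nat and A B F :: "'a set"
  assumes "simple_digraph V E"
    and "condition1 f V E"
    and "A \<union> B \<union> F = V" and "A \<inter> B = {}" and "A \<inter> F = {}" and "B \<inter> F = {}"
    and "A \<noteq> {}" and "B \<noteq> {}" and "card F \<le> f"
    and "\<not> reaches_paths f V E F B A"
  shows "\<exists>A' B'. A' \<noteq> {} \<and> B' \<noteq> {} \<and> A' \<inter> B' = {} \<and> A' \<union> B' = A \<union> B
           \<and> A' \<subseteq> A \<and> B \<subseteq> B' \<and> \<not> reaches f E B' A'"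
proof -
  have finV: "finite V" and EV: "E \<subseteq> V \<times> V" using assms(1) by (auto simp: simple_digraph_def)
  obtain y where yA: "y \<in> A" and noP: "\<not> (\<exists>P. finite P \<and> f + 1 \<le> card P
        \<and> (\<forall>p \<in> P. Xy_path V E B y p \<and> set p \<inter> F = {})
        \<and> (\<forall>p \<in> P. \<forall>q \<in> P. p \<noteq> q \<longrightarrow> set p \<inter> set q \<subseteq> {y}))"
    using assms(10) unfolding reaches_paths_def by blast
  define W where "W = (A \<union> B) - {y}"
  define G where "G = {(u, v). (u, v) \<in> E \<and> u \<in> W \<and> v \<in> W}"
  define N where "N = {u \<in> W. (u, y) \<in> E}"
  have yB: "y \<notin> B" using yA assms(4) by blast
  have BW: "B \<subseteq> W" using yB by (auto simp: W_def)
  have WV: "W \<subseteq> V" using assms(3) by (auto simp: W_def)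
  have WF: "W \<inter> F = {}" using assms(5,6) by (auto simp: W_def)
  have yV: "y \<in> V" using yA assms(3) by auto
  have yF: "y \<notin> F" using yA assms(5) by auto
  have finE: "finite E" using finV EV finite_subset by blast
  have GE: "G \<subseteq> E" by (auto simp: G_def)
  have finG: "finite G" using finE GE finite_subset by blast
  have finB: "finite B" using finV assms(3) finite_subset by blast
  have "N \<subseteq> V" using WV by (auto simp: N_def)
  then have finN: "finite N" using finV finite_subset by blast
  have RG: "Range G \<subseteq> W" by (auto simp: G_def)
  have "\<not> (\<forall>T. finite T \<longrightarrow> sep G B N T \<longrightarrow> f + 1 \<le> card T)"
  proof
    assume h: "\<forall>T. finite T \<longrightarrow> sep G B N T \<longrightarrow> f + 1 \<le> card T"
    obtain P where P: "linkage G B N P" "card P = f + 1" using menger[OF finG finB finN h] by blast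
    have Pp: "p \<noteq> [] \<and> distinct p \<and> walk G p \<and> hd p \<in> B \<and> last p \<in> N" if "p \<in> P" for p
      using P(1) that unfolding linkage_def by blast
    have pW: "set p \<subseteq> W" if "p \<in> P" for p
    proof -
      have "p = hd p # tl p" using Pp[OF that] by simp
      then have "set (tl p) \<subseteq> Range G" using Pp[OF that] walk_set_Range by metis
      moreover have "set p = insert (hd p) (set (tl p))" using Pp[OF that] by (rule_tac set_hd_tl) simp
      moreover have "hd p \<in> W" using BW Pp[OF that] by blast
      ultimately show ?thesis using RG by auto
    qed
    define P' where "P' = (\<lambda>p. p @ [y]) ` P"
    have inj: "inj_on (\<lambda>p. p @ [y]) P" by (auto simp: inj_on_def)
    have cP': "card P' = f + 1" using inj P(2) by (simp add: P'_def card_image)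
    have fP': "finite P'" using P(1) by (simp add: P'_def linkage_def)
    have good: "Xy_path V E B y (p @ [y]) \<and> set (p @ [y]) \<inter> F = {}" if "p \<in> P" for p
    proof -
      have pp: "p \<noteq> []" "distinct p" "walk G p" "hd p \<in> B" "last p \<in> N" using Pp[OF that] by auto
      have yp: "y \<notin> set p" using pW[OF that] by (auto simp: W_def)
      have "walk E p" using pp(3) GE walk_mono by blast
      moreover have "(last p, y) \<in> E" using pp(5) by (simp add: N_def)
      ultimately have w: "walk E (p @ [y])" using pp(1) by (simp add: walk_append)
      have "dpath V E (p @ [y])"
        unfolding dpath_def
      proof (intro conjI allI impI)
        show "p @ [y] \<noteq> []" by simp
        show "distinct (p @ [y])" using pp(2) yp by simp
        show "set (p @ [y]) \<subseteq> V" using pW[OF that] WV yV by auto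
        fix k assume "Suc k < length (p @ [y])"
        then show "((p @ [y]) ! k, (p @ [y]) ! Suc k) \<in> E" using walk_nth[OF w] by blast
      qed
      moreover have "hd (p @ [y]) \<in> B" using pp(1,4) by simp
      moreover have "set (p @ [y]) \<inter> F = {}" using pW[OF that] WF yF by auto
      ultimately show ?thesis unfolding Xy_path_def by simp
    qed
    have disj: "set p \<inter> set q \<subseteq> {y}" if pq: "p \<in> P'" "q \<in> P'" "p \<noteq> q" for p q
    proof -
      obtain p0 q0 where "p0 \<in> P" "q0 \<in> P" "p = p0 @ [y]" "q = q0 @ [y]" "p0 \<noteq> q0"
        using pq unfolding P'_def by blast
      moreover then have "set p0 \<inter> set q0 = {}" using P(1) unfolding linkage_def by blast
      ultimately show ?thesis by auto
    qed
    have g: "\<forall>p\<in>P'. Xy_path V E B y p \<and> set p \<inter> F = {}"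
    proof
      fix p assume "p \<in> P'"
      then obtain p0 where "p0 \<in> P" "p = p0 @ [y]" unfolding P'_def by blast
      then show "Xy_path V E B y p \<and> set p \<inter> F = {}" using good by simp
    qed
    have d: "\<forall>p \<in> P'. \<forall>q \<in> P'. p \<noteq> q \<longrightarrow> set p \<inter> set q \<subseteq> {y}"
      using disj by blast
    have "finite P' \<and> f + 1 \<le> card P'
        \<and> (\<forall>p \<in> P'. Xy_path V E B y p \<and> set p \<inter> F = {})
        \<and> (\<forall>p \<in> P'. \<forall>q \<in> P'. p \<noteq> q \<longrightarrow> set p \<inter> set q \<subseteq> {y})"
      using fP' cP' g d by simp
    then show False using noP by blast
  qed
  then obtain S where S: "finite S" "sep G B N S" "card S \<le> f" by (auto simp: not_le)
  define A' where "A' = insert y {v \<in> W. v \<notin> S \<and> (\<exists>n\<in>N. n \<notin> S \<and> (v, n) \<in> (restr G S)\<^sup>*)}"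
  define B' where "B' = (A \<union> B) - A'"
  have A'B: "A' \<inter> B = {}"
  proof -
    { fix v assume v: "v \<in> A'" "v \<in> B"
      then have "v \<noteq> y" using yB by blast
      then obtain n where "v \<notin> S" "n \<in> N" "n \<notin> S" "(v, n) \<in> (restr G S)\<^sup>*"
        using v(1) unfolding A'_def by blast
      then have False using S(2) v(2) unfolding sep_def by blast }
    then show ?thesis by blast
  qed
  have A'A: "A' \<subseteq> A" using A'B yA by (auto simp: A'_def W_def)
  have BB': "B \<subseteq> B'" using A'B by (auto simp: B'_def)
  have sub: "{i \<in> B'. \<exists>j \<in> A'. (i, j) \<in> E} \<subseteq> S"
  proof
    fix i assume "i \<in> {i \<in> B'. \<exists>j \<in> A'. (i, j) \<in> E}"
    then obtain j where i: "i \<in> B'" "j \<in> A'" "(i, j) \<in> E" by auto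
    have iW: "i \<in> W" using i(1) by (auto simp: B'_def A'_def W_def)
    show "i \<in> S"
    proof (rule ccontr)
      assume iS: "i \<notin> S"
      have "i \<in> A'"
      proof (cases "j = y")
        case True
        then have "i \<in> N" using iW i(3) by (simp add: N_def)
        then show ?thesis using iW iS unfolding A'_def by blast
      next
        case False
        then obtain n where j: "j \<in> W" "j \<notin> S" "n \<in> N" "n \<notin> S" "(j, n) \<in> (restr G S)\<^sup>*"
          using i(2) unfolding A'_def by blast
        have "(i, j) \<in> restr G S" using iW iS j(1,2) i(3) by (simp add: restr_def G_def)
        then have "(i, n) \<in> (restr G S)\<^sup>*" using j(5) by (meson converse_rtrancl_into_rtrancl)
        then show ?thesis using iW iS j(3,4) unfolding A'_def by blast
      qed
      then show False using i(1) by (simp add: B'_def)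
    qed
  qed
  have "card {i \<in> B'. \<exists>j \<in> A'. (i, j) \<in> E} \<le> f"
    using card_mono[OF S(1) sub] S(3) by simp
  then have nr: "\<not> reaches f E B' A'" unfolding reaches_def by simp
  have "A' \<noteq> {}" by (simp add: A'_def)
  moreover have "B' \<noteq> {}" using BB' assms(8) by blast
  moreover have "A' \<inter> B' = {}" by (auto simp: B'_def)
  moreover have "A' \<union> B' = A \<union> B" using A'A by (auto simp: B'_def)
  ultimately show ?thesis using A'A BB' nr by blast
qed

end
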